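(* Let $d\ge2$ and consider a $d$-dimensional system in the maximally mixed initial state $\mathbb{1}/d$, with two measurement settings $x,y\in\{0,1\}$ and outcomes $\pm$. Each measurement $x$ is specified by effects $\mathcal{E}_{\pm|x}$ (positive semidefinite, summing to $\mathbb{1}$) and post-measurement states $\sigma_{\pm|x}$, the same measurements being used at both time steps, with $p(ab|xy)=\mathrm{tr}(\mathcal{E}_{a|x}\mathbb{1}/d)\,\mathrm{tr}(\mathcal{E}_{b|y}\sigma_{a|x})$. Then, for all such choices, $$\mathcal{B}_1=p(++|00)+p(++|11)+p(+-|01)+p(+-|10)\le \max\left[3,\,4\left(1-\tfrac1d\right)\right].$$ *)

theory Defs
  imports "HOL-Analysis.Analysis"
begin

text \<open>Positive semidefinite complex matrix: the quadratic form v* A v is real and nonnegative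
  for every complex vector v (this implies Hermiticity).\<close>
definition psd :: "complex^'n^'n \<Rightarrow> bool" where
  "psd A \<longleftrightarrow> (\<forall>v::complex^'n.
     let q = (\<Sum>i\<in>UNIV. \<Sum>j\<in>UNIV. cnj (v$i) * A$i$j * v$j) in Im q = 0 \<and> Re q \<ge> 0)"

definition density :: "complex^'n^'n \<Rightarrow> bool" where
  "density \<sigma> \<longleftrightarrow> psd \<sigma> \<and> trace \<sigma> = 1"

text \<open>A two-outcome measurement (outcome True = +, False = -): effects are PSD and sum to the identity.\<close>
definition povm2 :: "(bool \<Rightarrow> complex^'n^'n) \<Rightarrow> bool" where
  "povm2 E \<longleftrightarrow> (\<forall>a. psd (E a)) \<and> E True + E False = mat 1"

definition seqprob ::
  "(bool \<Rightarrow> bool \<Rightarrow> complex^'n^'n) \<Rightarrow> (bool \<Rightarrow> bool \<Rightarrow> complex^'n^'n)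
     \<Rightarrow> bool \<Rightarrow> bool \<Rightarrow> bool \<Rightarrow> bool \<Rightarrow> complex" where
  "seqprob E \<sigma> a b x y =
     trace (E a x ** ((1 / of_nat CARD('n)) *\<^sub>R mat 1 :: complex^'n^'n)) * trace (E b y ** \<sigma> a x)"

end

theory Submission
  imports Defs
begin

definition qf :: "complex^'n^'n \<Rightarrow> complex^'n \<Rightarrow> complex" where
  "qf Y v = (\<Sum>i\<in>UNIV. \<Sum>j\<in>UNIV. cnj (v$i) * Y$i$j * v$j)"

definition tr2 :: "complex^'n^'n \<Rightarrow> complex^'n^'n \<Rightarrow> complex" where
  "tr2 X Y = (\<Sum>i\<in>UNIV. \<Sum>j\<in>UNIV. X$i$j * Y$j$i)"

lemma trace_mult_tr2: "trace (X ** Y) = tr2 X Y"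
  by (simp add: trace_def matrix_matrix_mult_def tr2_def)

lemma psd_qf: "psd Y \<Longrightarrow> Im (qf Y v) = 0 \<and> Re (qf Y v) \<ge> 0"
  unfolding psd_def qf_def Let_def by blast

lemma sum_two:
  fixes f :: "'n::finite \<Rightarrow> complex"
  assumes "i \<noteq> j"
  shows "(\<Sum>l\<in>UNIV. f l * (if l = i then a else if l = j then b else 0)) = f i * a + f j * b"
proof -
  have "(\<Sum>l\<in>UNIV. f l * (if l = i then a else if l = j then b else 0))
      = (\<Sum>l\<in>UNIV. (if l = i then f l * a else 0) + (if l = j then f l * b else 0))"
    by (rule sum.cong) (use assms in auto)
  also have "\<dots> = f i * a + f j * b" by (simp add: sum.distrib)
  finally show ?thesis .
qed

lemma sum_two':
  fixes f :: "'n::finite \<Rightarrow> complex"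
  assumes "i \<noteq> j"
  shows "(\<Sum>l\<in>UNIV. cnj (if l = i then a else if l = j then b else 0) * f l) = cnj a * f i + cnj b * f j"
proof -
  have "(\<Sum>l\<in>UNIV. cnj (if l = i then a else if l = j then b else 0) * f l)
      = (\<Sum>l\<in>UNIV. (if l = i then cnj a * f l else 0) + (if l = j then cnj b * f l else 0))"
    by (rule sum.cong) (use assms in auto)
  also have "\<dots> = cnj a * f i + cnj b * f j" by (simp add: sum.distrib)
  finally show ?thesis .
qed

lemma qf_two:
  fixes Y :: "complex^'n^'n"
  assumes "i \<noteq> j"
  shows "qf Y (\<chi> l. if l = i then a else if l = j then b else 0)
     = cnj a * Y$i$i * a + cnj a * Y$i$j * b + cnj b * Y$j$i * a + cnj b * Y$j$j * b"
proof -
  have "qf Y (\<chi> l. if l = i then a else if l = j then b else 0)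
     = (\<Sum>l\<in>UNIV. cnj (if l = i then a else if l = j then b else 0) * 
          (\<Sum>m\<in>UNIV. Y$l$m * (if m = i then a else if m = j then b else 0)))"
    unfolding qf_def by (simp add: sum_distrib_left mult.assoc)
  also have "\<dots> = (\<Sum>l\<in>UNIV. cnj (if l = i then a else if l = j then b else 0) * 
          (Y$l$i * a + Y$l$j * b))"
    using sum_two[OF assms] by simp
  also have "\<dots> = cnj a * (Y$i$i * a + Y$i$j * b) + cnj b * (Y$j$i * a + Y$j$j * b)"
    by (rule sum_two'[OF assms])
  finally show ?thesis by (simp add: algebra_simps)
qed

lemma qf_one:
  fixes Y :: "complex^'n^'n"
  shows "qf Y (\<chi> l. if l = i then 1 else 0) = Y$i$i"
proof -
  have "\<And>l. (\<Sum>m\<in>UNIV. cnj ((\<chi> l. if l = i then 1 else 0)$l) * Y$l$m * (\<chi> l. if l = i then (1::complex) else 0)$m)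
      = (if l = i then Y$l$i else 0)" by (simp add: if_distrib[where f="\<lambda>x. _ * x"] cong: if_cong)
  then show ?thesis unfolding qf_def by simp
qed

lemma psd_diag: "psd Y \<Longrightarrow> Im (Y$i$i) = 0 \<and> Re (Y$i$i) \<ge> 0"
  using psd_qf[of Y "\<chi> l. if l = i then 1 else 0"] by (simp add: qf_one)

lemma psd_herm:
  assumes "psd Y" shows "Y$j$i = cnj (Y$i$j)"
proof (cases "i = j")
  case True then show ?thesis using psd_diag[OF assms, of i] by (simp add: complex_eq_iff)
next
  case False
  have a: "Im (Y$i$i + Y$i$j + Y$j$i + Y$j$j) = 0"
    using psd_qf[OF assms, of "\<chi> l. if l = i then 1 else if l = j then 1 else 0"] qf_two[OF False, of Y 1 1]
    by simp
  have b: "Im (Y$i$i + Y$i$j * \<i> - \<i> * Y$j$i + Y$j$j) = 0"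
    using psd_qf[OF assms, of "\<chi> l. if l = i then 1 else if l = j then \<i> else 0"] qf_two[OF False, of Y 1 \<i>]
    by simp
  show ?thesis using a b psd_diag[OF assms, of i] psd_diag[OF assms, of j]
    by (simp add: complex_eq_iff)
qed


lemma sum_if_outer:
  fixes f :: "'n::finite \<Rightarrow> complex" and k :: "'m::finite"
  shows "(\<Sum>i\<in>UNIV. \<Sum>j\<in>UNIV. if i = k then f j else 0) = (\<Sum>j\<in>UNIV. f j)"
proof -
  have "(\<Sum>i\<in>UNIV. \<Sum>j\<in>UNIV. if i = k then f j else 0) = (\<Sum>i\<in>UNIV. if i = k then (\<Sum>j\<in>UNIV. f j) else 0)"
    by (intro sum.cong) auto
  also have "\<dots> = (\<Sum>j\<in>UNIV. f j)" using sum.delta[of UNIV k "\<lambda>_. sum f UNIV"] by simp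
  finally show ?thesis .
qed

lemma qf_add_axis:
  fixes Y :: "complex^'n^'n"
  shows "qf Y (\<chi> l. v$l + (if l = k then t else 0)) = qf Y v + cnj t * (\<Sum>j\<in>UNIV. Y$k$j * v$j)
     + (\<Sum>i\<in>UNIV. cnj (v$i) * Y$i$k) * t + cnj t * Y$k$k * t"
proof -
  have "qf Y (\<chi> l. v$l + (if l = k then t else 0)) =
    (\<Sum>i\<in>UNIV. \<Sum>j\<in>UNIV. cnj (v$i) * Y$i$j * v$j + cnj (v$i) * Y$i$j * (if j = k then t else 0)
      + cnj (if i = k then t else 0) * Y$i$j * v$j + cnj (if i = k then t else 0) * Y$i$j * (if j = k then t else 0))"
    unfolding qf_def by (intro sum.cong refl) (simp add: algebra_simps)
  also have "\<dots> = qf Y v + (\<Sum>i\<in>UNIV. \<Sum>j\<in>UNIV. cnj (v$i) * Y$i$j * (if j = k then t else 0))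
      + (\<Sum>i\<in>UNIV. \<Sum>j\<in>UNIV. cnj (if i = k then t else 0) * Y$i$j * v$j)
      + (\<Sum>i\<in>UNIV. \<Sum>j\<in>UNIV. cnj (if i = k then t else 0) * Y$i$j * (if j = k then t else 0))"
    unfolding qf_def by (simp only: sum.distrib)
  also have "(\<Sum>i\<in>UNIV. \<Sum>j\<in>UNIV. cnj (v$i) * Y$i$j * (if j = k then t else 0))
      = (\<Sum>i\<in>UNIV. cnj (v$i) * Y$i$k) * t"
    unfolding sum_distrib_right
    by (intro sum.cong refl) (simp add: if_distrib[where f="\<lambda>x. _ * x"] cong: if_cong)
  also have "(\<Sum>i\<in>UNIV. \<Sum>j\<in>UNIV. cnj (if i = k then t else 0) * Y$i$j * v$j)
      = cnj t * (\<Sum>j\<in>UNIV. Y$k$j * v$j)"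
  proof -
    have "(\<Sum>i\<in>UNIV. \<Sum>j\<in>UNIV. cnj (if i = k then t else 0) * Y$i$j * v$j)
       = (\<Sum>i\<in>UNIV. if i = k then (\<Sum>j\<in>UNIV. cnj t * Y$k$j * v$j) else 0)"
      by (intro sum.cong) auto
    also have "\<dots> = cnj t * (\<Sum>j\<in>UNIV. Y$k$j * v$j)"
      by (simp add: sum_distrib_left mult.assoc)
    finally show ?thesis .
  qed
  also have "(\<Sum>i\<in>UNIV. \<Sum>j\<in>UNIV. cnj (if i = k then t else 0) * Y$i$j * (if j = k then t else 0))
      = cnj t * Y$k$k * t"
  proof -
    have "(\<Sum>i\<in>UNIV. \<Sum>j\<in>UNIV. cnj (if i = k then t else 0) * Y$i$j * (if j = k then t else 0))
       = (\<Sum>i\<in>UNIV. if i = k then cnj t * Y$k$k * t else 0)"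
      by (intro sum.cong refl) (simp add: if_distrib[where f="\<lambda>x. _ * x"] cong: if_cong)
    also have "\<dots> = cnj t * Y$k$k * t" by simp
    finally show ?thesis .
  qed
  finally show ?thesis by (simp add: algebra_simps)
qed


lemma psd_zero_diag:
  fixes Y :: "complex^'n^'n"
  assumes "psd Y" "\<And>i. Y$i$i = 0"
  shows "Y$i$j = 0"
proof (cases "i = j")
  case True then show ?thesis using assms by simp
next
  case False
  let ?z = "Y$i$j"
  have h: "Y$j$i = cnj ?z" using psd_herm[OF assms(1)] .
  have "qf Y (\<chi> l. if l = i then - ?z else if l = j then 1 else 0) = - 2 * (?z * cnj ?z)"
    unfolding qf_two[OF False] using assms(2)[of i] assms(2)[of j] h by (simp add: mult.commute)
  then have "Re (- 2 * (?z * cnj ?z)) \<ge> 0" using psd_qf[OF assms(1)] by metis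
  then have "(Re ?z)^2 + (Im ?z)^2 \<le> 0" unfolding complex_mult_cnj by simp
  then have "Re ?z = 0 \<and> Im ?z = 0" using sum_power2_le_zero_iff by blast
  then show ?thesis by (simp add: complex_eq_iff)
qed


lemma psd_iff_qf: "psd Y \<longleftrightarrow> (\<forall>v. Im (qf Y v) = 0 \<and> Re (qf Y v) \<ge> 0)"
  unfolding psd_def qf_def Let_def by blast
lemma psd_schur:
  fixes Y :: "complex^'n^'n"
  assumes Y: "psd Y" and yk: "Y$k$k = of_real y" and ypos: "y > 0"
  shows "psd (\<chi> i j. Y$i$j - Y$i$k * Y$k$j / Y$k$k)"
proof -
  let ?Y' = "(\<chi> i j. Y$i$j - Y$i$k * Y$k$j / Y$k$k :: complex^'n^'n)"
  have key: "qf ?Y' v = qf Y (\<chi> l. v$l + (if l = k then - (\<Sum>j\<in>UNIV. Y$k$j * v$j) / Y$k$k else 0))" for v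
  proof -
    define m where "m = (\<Sum>j\<in>UNIV. Y$k$j * v$j)"
    have n: "(\<Sum>i\<in>UNIV. cnj (v$i) * Y$i$k) = cnj m"
    proof -
      have "(\<Sum>i\<in>UNIV. cnj (v$i) * Y$i$k) = (\<Sum>i\<in>UNIV. cnj (Y$k$i * v$i))"
        by (intro sum.cong refl) (metis psd_herm[OF Y] complex_cnj_mult mult.commute)
      then show ?thesis unfolding m_def by simp
    qed
    have "qf ?Y' v = (\<Sum>i\<in>UNIV. \<Sum>j\<in>UNIV. cnj (v$i) * Y$i$j * v$j - (cnj (v$i) * Y$i$k) * (Y$k$j * v$j) / Y$k$k)"
      unfolding qf_def by (intro sum.cong refl) (simp add: algebra_simps diff_divide_distrib)
    also have "\<dots> = qf Y v - (\<Sum>i\<in>UNIV. cnj (v$i) * Y$i$k) * m / Y$k$k"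
      unfolding qf_def m_def sum_subtractf sum_divide_distrib[symmetric] sum_product by simp
    also have "\<dots> = qf Y v - cnj m * m / Y$k$k" using n by simp
    finally have 1: "qf ?Y' v = qf Y v - cnj m * m / Y$k$k" .
    have cy: "cnj (Y$k$k) = Y$k$k" using yk by simp
    have "qf Y (\<chi> l. v$l + (if l = k then - m / Y$k$k else 0)) 
        = qf Y v + cnj (- m / Y$k$k) * m + cnj m * (- m / Y$k$k) + cnj (- m / Y$k$k) * Y$k$k * (- m / Y$k$k)"
      using qf_add_axis[of Y v k "- m / Y$k$k"] n unfolding m_def by simp
    also have "\<dots> = qf Y v - cnj m * m / Y$k$k"
    proof -
      have K: "Y$k$k \<noteq> 0" using yk ypos by simp
      have "cnj (- m / Y$k$k) = - cnj m / Y$k$k" using cy by simp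
      then show ?thesis using K by (simp add: field_simps)
    qed
    finally show ?thesis using 1 unfolding m_def by simp
  qed
  show ?thesis unfolding psd_iff_qf
    using key psd_qf[OF Y] by metis
qed


lemma psd_tr2_nonneg:
  fixes X Y :: "complex^'n^'n"
  assumes X: "psd X" and Y: "psd Y"
  shows "0 \<le> Re (tr2 X Y)"
  using Y
proof (induction "card {i. Y$i$i \<noteq> 0}" arbitrary: Y rule: less_induct)
  case (less Y)
  show ?case
  proof (cases "\<exists>k. Y$k$k \<noteq> 0")
    case False
    then have "\<And>i j. Y$i$j = 0" using psd_zero_diag[OF less.prems] by blast
    then show ?thesis by (simp add: tr2_def)
  next
    case True
    then obtain k where k: "Y$k$k \<noteq> 0" by blast
    define y where "y = Re (Y$k$k)"
    have yk: "Y$k$k = of_real y" using psd_diag[OF less.prems, of k] unfolding y_def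
      by (simp add: complex_eq_iff)
    have ypos: "y > 0" using psd_diag[OF less.prems, of k] k yk by force
    define Y' where "Y' = ((\<chi> i j. Y$i$j - Y$i$k * Y$k$j / Y$k$k) :: complex^'n^'n)"
    have psdY': "psd Y'" unfolding Y'_def by (rule psd_schur[OF less.prems yk ypos])
    have sub: "{i. Y'$i$i \<noteq> 0} \<subset> {i. Y$i$i \<noteq> 0}"
    proof
      show "{i. Y'$i$i \<noteq> 0} \<subseteq> {i. Y$i$i \<noteq> 0}"
      proof
        fix i assume "i \<in> {i. Y'$i$i \<noteq> 0}"
        then have ne: "Y'$i$i \<noteq> 0" by simp
        show "i \<in> {i. Y$i$i \<noteq> 0}"
        proof (rule ccontr)
          assume "i \<notin> {i. Y$i$i \<noteq> 0}"
          then have z: "Y$i$i = 0" by simp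
          have hk: "Y$k$i = cnj (Y$i$k)" using psd_herm[OF less.prems] by blast
          have "Y'$i$i = - (Y$i$k * cnj (Y$i$k)) / of_real y" unfolding Y'_def using z hk yk by simp
          also have "\<dots> = - of_real ((Re (Y$i$k))^2 + (Im (Y$i$k))^2) / of_real y"
            unfolding complex_mult_cnj by simp
          finally have e: "Y'$i$i = - of_real (((Re (Y$i$k))^2 + (Im (Y$i$k))^2) / y)"
            by (simp only: of_real_divide) (simp add: divide_simps)
          have "0 \<le> Re (Y'$i$i)" using psd_diag[OF psdY', of i] by simp
          then have "((Re (Y$i$k))^2 + (Im (Y$i$k))^2) / y \<le> 0" using e by simp
          moreover have "((Re (Y$i$k))^2 + (Im (Y$i$k))^2) / y \<ge> 0" using ypos by simp
          ultimately have "((Re (Y$i$k))^2 + (Im (Y$i$k))^2) / y = 0" by linarith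
          then have "Y'$i$i = 0" using e by (metis minus_zero of_real_0)
          with ne show False by simp
        qed
      qed
      have "Y'$k$k = 0" unfolding Y'_def using k psd_herm[OF less.prems, of k k] by simp
      then show "{i. Y'$i$i \<noteq> 0} \<noteq> {i. Y$i$i \<noteq> 0}" using k by blast
    qed
    have IH: "0 \<le> Re (tr2 X Y')"
      using less.hyps[OF psubset_card_mono[OF finite sub] psdY'] .
    define c where "c = ((\<chi> j. Y$j$k) :: complex^'n)"
    have "tr2 X Y = tr2 X Y' + qf X c / Y$k$k"
    proof -
      have "tr2 X Y' = tr2 X Y - (\<Sum>i\<in>UNIV. \<Sum>j\<in>UNIV. Y$k$i * X$i$j * Y$j$k) / Y$k$k"
        unfolding tr2_def Y'_def sum_divide_distrib sum_subtractf[symmetric]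
        by (intro sum.cong refl) (simp add: algebra_simps diff_divide_distrib)
      moreover have "qf X c = (\<Sum>i\<in>UNIV. \<Sum>j\<in>UNIV. Y$k$i * X$i$j * Y$j$k)"
        unfolding qf_def c_def by (intro sum.cong refl) (simp add: psd_herm[OF less.prems, of k])
      ultimately show ?thesis by simp
    qed
    moreover have "0 \<le> Re (qf X c / Y$k$k)"
      using psd_qf[OF X, of c] yk ypos by (simp add: Re_divide_of_real)
    ultimately show ?thesis using IH by simp
  qed
qed


lemma cs_complex:
  fixes w v :: "'n::finite \<Rightarrow> complex"
  shows "(cmod (\<Sum>i\<in>UNIV. cnj (w i) * v i))^2 \<le> (\<Sum>i\<in>UNIV. (cmod (w i))^2) * (\<Sum>i\<in>UNIV. (cmod (v i))^2)"
proof -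
  have "cmod (\<Sum>i\<in>UNIV. cnj (w i) * v i) \<le> (\<Sum>i\<in>UNIV. cmod (w i) * cmod (v i))"
    by (rule order_trans[OF norm_sum]) (simp add: norm_mult)
  then have "(cmod (\<Sum>i\<in>UNIV. cnj (w i) * v i))^2 \<le> (\<Sum>i\<in>UNIV. cmod (w i) * cmod (v i))^2"
    by (simp add: power_mono)
  also have "\<dots> \<le> (\<Sum>i\<in>UNIV. (cmod (w i))^2) * (\<Sum>i\<in>UNIV. (cmod (v i))^2)"
    by (rule Cauchy_Schwarz_ineq_sum)
  finally show ?thesis .
qed

lemma cnj_mult_self: "cnj z * z = of_real ((cmod z)^2)"
  by (metis complex_norm_square mult.commute)

lemma mult_cnj_self': "z * cnj z = (complex_of_real (cmod z))^2"
  by (metis complex_norm_square of_real_power)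

lemma density_le:
  fixes \<sigma> :: "complex^'n^'n"
  assumes "density \<sigma>"
  shows "psd (mat 1 - \<sigma>)"
proof -
  have S: "psd \<sigma>" and T: "trace \<sigma> = 1" using assms unfolding density_def by auto
  show ?thesis unfolding psd_iff_qf
  proof
    fix v :: "complex^'n"
    define N where "N = (\<Sum>i\<in>UNIV. (cmod (v$i))^2)"
    define M where "M = ((\<chi> i j. (if i = j then of_real N else 0) - v$i * cnj (v$j)) :: complex^'n^'n)"
    have "psd M" unfolding psd_iff_qf
    proof
      fix w :: "complex^'n"
      define z where "z = (\<Sum>i\<in>UNIV. cnj (w$i) * v$i)"
      have "qf M w = (\<Sum>i\<in>UNIV. \<Sum>j\<in>UNIV. (if i = j then of_real N * (cnj (w$i) * w$i) else 0) - (cnj (w$i) * v$i) * (cnj (v$j) * w$j))"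
        unfolding qf_def M_def by (intro sum.cong refl) (auto simp: algebra_simps)
      also have "\<dots> = of_real N * (\<Sum>i\<in>UNIV. cnj (w$i) * w$i) - z * (\<Sum>j\<in>UNIV. cnj (v$j) * w$j)"
        unfolding sum_subtractf z_def sum_product by (simp add: sum_distrib_left)
      also have "(\<Sum>j\<in>UNIV. cnj (v$j) * w$j) = cnj z"
        unfolding z_def by (simp add: mult.commute)
      also have "of_real N * (\<Sum>i\<in>UNIV. cnj (w$i) * w$i) - z * cnj z = of_real (N * (\<Sum>i\<in>UNIV. (cmod (w$i))^2) - (cmod z)^2)"
        by (simp add: cnj_mult_self mult_cnj_self')
      finally have q: "qf M w = of_real (N * (\<Sum>i\<in>UNIV. (cmod (w$i))^2) - (cmod z)^2)" .
      have "(cmod z)^2 \<le> (\<Sum>i\<in>UNIV. (cmod (w$i))^2) * N"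
        unfolding z_def N_def by (rule cs_complex)
      then show "Im (qf M w) = 0 \<and> 0 \<le> Re (qf M w)" unfolding q by (simp add: mult.commute)
    qed
    then have P: "0 \<le> Re (tr2 \<sigma> M)" by (rule psd_tr2_nonneg[OF S])
    have "tr2 \<sigma> M = (\<Sum>i\<in>UNIV. \<Sum>j\<in>UNIV. (if i = j then of_real N * \<sigma>$i$j else 0) - cnj (v$i) * \<sigma>$i$j * v$j)"
      unfolding tr2_def M_def by (intro sum.cong refl) (auto simp: algebra_simps)
    also have "\<dots> = of_real N * trace \<sigma> - qf \<sigma> v"
      unfolding sum_subtractf qf_def trace_def sum_distrib_left by simp
    finally have tr: "tr2 \<sigma> M = of_real N - qf \<sigma> v" using T by simp
    have "qf (mat 1 - \<sigma>) v = (\<Sum>i\<in>UNIV. \<Sum>j\<in>UNIV. (if i = j then cnj (v$i) * v$i else 0) - cnj (v$i) * \<sigma>$i$j * v$j)"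
      unfolding qf_def by (intro sum.cong refl) (auto simp: algebra_simps mat_def)
    also have "\<dots> = (\<Sum>i\<in>UNIV. cnj (v$i) * v$i) - qf \<sigma> v"
      unfolding sum_subtractf qf_def by simp
    also have "\<dots> = of_real N - qf \<sigma> v"
      unfolding N_def by (simp add: cnj_mult_self)
    finally have "qf (mat 1 - \<sigma>) v = tr2 \<sigma> M" using tr by simp
    then show "Im (qf (mat 1 - \<sigma>) v) = 0 \<and> 0 \<le> Re (qf (mat 1 - \<sigma>) v)"
      using P tr psd_qf[OF S, of v] by simp
  qed
qed

lemma final_ineq:
  fixes d tP tQ a0 b0 a1 b1 :: real
  assumes d: "d \<ge> 2" and "0 \<le> tP" "tP \<le> d" "0 \<le> tQ" "tQ \<le> d"
    and "0 \<le> a0" "a0 \<le> 1" "0 \<le> b0" "b0 \<le> 1" "0 \<le> a1" "a1 \<le> 1" "0 \<le> b1" "b1 \<le> 1"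
    and hQ: "tQ \<le> d - 1 + b0" and hP: "tP \<le> d - 1 + a1"
  shows "tP / d * (a0 + (1 - b0)) + tQ / d * (b1 + (1 - a1)) \<le> max 3 (4 * (1 - 1 / d))"
proof -
  define s where "s = a0 - b0"
  define t where "t = b1 - a1"
  have s1: "-1 \<le> s" "s \<le> 1" "-1 \<le> t" "t \<le> 1" using assms unfolding s_def t_def by auto
  have P: "tP \<le> d - t" "tQ \<le> d - s" using assms unfolding s_def t_def by auto
  have key: "tP * (1 + s) + tQ * (1 + t) \<le> max (3 * d) (4 * d - 4)"
  proof (cases "s < 0 \<or> t < 0")
    case True
    then show ?thesis
    proof
      assume "s < 0"
      have "tP * (1 + s) \<le> d * (1 + s)" using assms s1 by (intro mult_right_mono) auto
      moreover have "tQ * (1 + t) \<le> (d - s) * 2" using P s1 assms by (intro mult_mono) auto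
      moreover have "s * (d - 2) \<le> 0" using \<open>s < 0\<close> d by (intro mult_nonpos_nonneg) auto
      ultimately show ?thesis by (simp add: algebra_simps)
    next
      assume "t < 0"
      have "tQ * (1 + t) \<le> d * (1 + t)" using assms s1 by (intro mult_right_mono) auto
      moreover have "tP * (1 + s) \<le> (d - t) * 2" using P s1 assms by (intro mult_mono) auto
      moreover have "t * (d - 2) \<le> 0" using \<open>t < 0\<close> d by (intro mult_nonpos_nonneg) auto
      ultimately show ?thesis by (simp add: algebra_simps)
    qed
  next
    case False
    then have st: "0 \<le> s" "0 \<le> t" by auto
    have "tP * (1 + s) \<le> (d - t) * (1 + s)" using P st by (intro mult_right_mono) auto
    moreover have "tQ * (1 + t) \<le> (d - s) * (1 + t)" using P st by (intro mult_right_mono) auto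
    moreover have "(d - t) * (1 + s) + (d - s) * (1 + t) \<le> max (3 * d) (4 * d - 4)"
    proof (cases "d \<ge> 3")
      case True
      have a: "0 \<le> (d - 3) * ((1 - s) + (1 - t))" using True s1 by simp
      have b: "0 \<le> (1 - s) * (1 - t)" using st s1 by simp
      have "(d - t) * (1 + s) + (d - s) * (1 + t) \<le> 4 * d - 4" using a b by (simp add: algebra_simps)
      then show ?thesis by simp
    next
      case False
      have a: "0 \<le> d * ((1 - s) * (1 - t))" using d s1 by simp
      have b: "0 \<le> s * (1 - t)" "0 \<le> t * (1 - s)" using st s1 by simp_all
      have c: "0 \<le> (s * t) * (4 - d)" using st False by simp
      have "(d - t) * (1 + s) + (d - s) * (1 + t) \<le> 3 * d" using a b c by (simp add: algebra_simps)
      then show ?thesis by simp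
    qed
    ultimately show ?thesis by linarith
  qed
  have dpos: "d > 0" using d by simp
  have "tP / d * (a0 + (1 - b0)) + tQ / d * (b1 + (1 - a1)) = (tP * (1 + s) + tQ * (1 + t)) / d"
    unfolding s_def t_def using dpos by (simp add: add_divide_distrib[symmetric] algebra_simps)
  also have "\<dots> \<le> max (3 * d) (4 * d - 4) / d" using key dpos by (simp add: divide_right_mono)
  also have "\<dots> = max 3 (4 * (1 - 1 / d))"
    using dpos by (simp add: max_divide_distrib_right field_simps)
  finally show ?thesis .
qed


lemma tr2_diff_left: "tr2 (A - B) Y = tr2 A Y - tr2 B Y"
  unfolding tr2_def by (simp add: sum_subtractf algebra_simps)

lemma tr2_diff_right: "tr2 X (A - B) = tr2 X A - tr2 X B"
  unfolding tr2_def by (simp add: sum_subtractf algebra_simps)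

lemma tr2_mat1_left: "tr2 (mat 1) Y = trace Y"
  unfolding tr2_def trace_def mat_def by (simp add: if_distrib[where f="\<lambda>x. x * _"] cong: if_cong)

lemma tr2_mat1_right: "tr2 X (mat 1) = trace X"
  unfolding tr2_def trace_def mat_def by (simp add: if_distrib[where f="\<lambda>x. _ * x"] cong: if_cong)

lemma tr2_scaleR_mat1: "tr2 X (r *\<^sub>R mat 1) = of_real r * trace X"
proof -
  have e: "(r *\<^sub>R mat 1 :: complex^'n^'n)$i$j = (if i = j then of_real r else 0)" for i j
    by (auto simp: mat_def of_real_def)
  show ?thesis unfolding tr2_def trace_def e
    by (simp add: if_distrib[where f="\<lambda>x. _ * x"] sum_distrib_left mult.commute cong: if_cong)
qed

lemma trace_diff: "trace (A - B :: complex^'n^'n) = trace A - trace B"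
  unfolding trace_def by (simp add: sum_subtractf)

lemma trace_mat1: "trace (mat 1 :: complex^'n^'n) = of_nat CARD('n)"
  unfolding trace_def mat_def by simp

lemma trace_psd: "psd P \<Longrightarrow> Im (trace P) = 0 \<and> 0 \<le> Re (trace P)"
  unfolding trace_def using psd_diag[of P] by (simp add: sum_nonneg)

lemma re_prod: "Im u = 0 \<Longrightarrow> Re (of_real c * u * z) = c * Re u * Re z"
  by simp

theorem mainTheorem6:
  fixes E \<sigma> :: "bool \<Rightarrow> bool \<Rightarrow> complex^'n^'n"
  assumes "CARD('n) \<ge> 2"
    and "\<And>x. povm2 (\<lambda>a. E a x)"
    and "\<And>a x. density (\<sigma> a x)"
  shows "Re (seqprob E \<sigma> True True False False + seqprob E \<sigma> True True True True
           + seqprob E \<sigma> True False False True + seqprob E \<sigma> True False True False)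
         \<le> max 3 (4 * (1 - 1 / real CARD('n)))"
proof -
  define d where "d = real CARD('n)"
  define P where "P = E True False"
  define Q where "Q = E True True"
  define s0 where "s0 = \<sigma> True False"
  define s1 where "s1 = \<sigma> True True"
  have psdE: "psd (E a x)" for a x using assms(2)[of x] unfolding povm2_def by blast
  have EF: "E False x = mat 1 - E True x" for x
    using assms(2)[of x] unfolding povm2_def by (metis add_diff_cancel_left')
  have dens: "psd (\<sigma> a x)" "trace (\<sigma> a x) = 1" for a x using assms(3) unfolding density_def by auto
  have sq: "seqprob E \<sigma> a b x y = of_real (1 / d) * trace (E a x) * tr2 (E b y) (\<sigma> a x)" for a b x y
    unfolding seqprob_def trace_mult_tr2 tr2_scaleR_mat1 d_def by simp
  define tP where "tP = Re (trace P)"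
  define tQ where "tQ = Re (trace Q)"
  define a0 where "a0 = Re (tr2 P s0)"
  define b0 where "b0 = Re (tr2 Q s0)"
  define a1 where "a1 = Re (tr2 P s1)"
  define b1 where "b1 = Re (tr2 Q s1)"
  have imP: "Im (trace P) = 0" and imQ: "Im (trace Q) = 0"
    using trace_psd[OF psdE] unfolding P_def Q_def by auto
  have lhs: "Re (seqprob E \<sigma> True True False False + seqprob E \<sigma> True True True True
           + seqprob E \<sigma> True False False True + seqprob E \<sigma> True False True False)
        = tP / d * (a0 + (1 - b0)) + tQ / d * (b1 + (1 - a1))"
  proof -
    have t3: "Re (tr2 (E False True) (\<sigma> True False)) = 1 - b0"
      unfolding EF tr2_diff_left tr2_mat1_left b0_def s0_def Q_def dens by simp
    have t4: "Re (tr2 (E False False) (\<sigma> True True)) = 1 - a1"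
      unfolding EF tr2_diff_left tr2_mat1_left a1_def s1_def P_def dens by simp
    have imP': "Im (trace (E True False)) = 0" and imQ': "Im (trace (E True True)) = 0"
      using imP imQ unfolding P_def Q_def .
    have r: "Re (of_real (1 / d) * u * z) = Re u / d * Re z" if "Im u = 0" for u z
      using re_prod[OF that, of "1 / d" z] by simp
    have e1: "Re (seqprob E \<sigma> True True False False) = tP / d * a0"
      unfolding sq r[OF imP'] tP_def a0_def P_def s0_def ..
    have e2: "Re (seqprob E \<sigma> True True True True) = tQ / d * b1"
      unfolding sq r[OF imQ'] tQ_def b1_def Q_def s1_def ..
    have e3: "Re (seqprob E \<sigma> True False False True) = tP / d * (1 - b0)"
      unfolding sq r[OF imP'] t3 tP_def P_def ..
    have e4: "Re (seqprob E \<sigma> True False True False) = tQ / d * (1 - a1)"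
      unfolding sq r[OF imQ'] t4 tQ_def Q_def ..
    show ?thesis unfolding plus_complex.sel e1 e2 e3 e4 by (simp add: divide_inverse algebra_simps)
  qed
  have d2: "d \<ge> 2" using assms(1) unfolding d_def by simp
  have nn: "0 \<le> Re (tr2 A B)" if "psd A" "psd B" for A B using psd_tr2_nonneg that by blast
  have psdP: "psd P" "psd (mat 1 - P)" and psdQ: "psd Q" "psd (mat 1 - Q)"
    using psdE EF unfolding P_def Q_def by metis+
  have tPd: "0 \<le> tP" "tP \<le> d"
    using trace_psd[OF psdP(1)] trace_psd[OF psdP(2)] unfolding tP_def d_def
    by (auto simp: trace_def mat_def sum_subtractf)
  have tQd: "0 \<le> tQ" "tQ \<le> d"
    using trace_psd[OF psdQ(1)] trace_psd[OF psdQ(2)] unfolding tQ_def d_def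
    by (auto simp: trace_def mat_def sum_subtractf)
  have a0b: "0 \<le> a0" "a0 \<le> 1"
    using nn[OF psdP(1) dens(1)] nn[OF psdP(2) dens(1)] dens(2)
    unfolding a0_def s0_def tr2_diff_left tr2_mat1_left by auto
  have b0b: "0 \<le> b0" "b0 \<le> 1"
    using nn[OF psdQ(1) dens(1)] nn[OF psdQ(2) dens(1)] dens(2)
    unfolding b0_def s0_def tr2_diff_left tr2_mat1_left by auto
  have a1b: "0 \<le> a1" "a1 \<le> 1"
    using nn[OF psdP(1) dens(1)] nn[OF psdP(2) dens(1)] dens(2)
    unfolding a1_def s1_def tr2_diff_left tr2_mat1_left by auto
  have b1b: "0 \<le> b1" "b1 \<le> 1"
    using nn[OF psdQ(1) dens(1)] nn[OF psdQ(2) dens(1)] dens(2)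
    unfolding b1_def s1_def tr2_diff_left tr2_mat1_left by auto
  have hQ: "tQ \<le> d - 1 + b0"
    using nn[OF psdQ(2) density_le[OF assms(3)[of True False]]] dens(2)[of True False]
    unfolding tQ_def b0_def s0_def d_def tr2_diff_left tr2_diff_right tr2_mat1_left tr2_mat1_right trace_diff trace_mat1
    by simp
  have hP: "tP \<le> d - 1 + a1"
    using nn[OF psdP(2) density_le[OF assms(3)[of True True]]] dens(2)[of True True]
    unfolding tP_def a1_def s1_def d_def tr2_diff_left tr2_diff_right tr2_mat1_left tr2_mat1_right trace_diff trace_mat1
    by simp
  show ?thesis unfolding lhs d_def[symmetric]
    by (rule final_ineq[OF d2 tPd tQd a0b b0b a1b b1b hQ hP])
qed

end
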